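(* Let $t\geq 2$ be an integer, $m=4t+2$, $n=2^m+1$, $\delta_1=\frac{n}{5}$ and $\delta_2=2^{4t-1}+\frac{2^{4t}-1}{5}$. If $x$ is an odd integer with $\delta_2<x\leq n-1$ and $x\neq\delta_1$, then $x$ is not a coset leader modulo $n$.
   Context: For $n=2^m+1$ and an integer $x$, the 2-cyclotomic coset of $x$ modulo $n$ is $C_x=\{x\cdot 2^{j} \bmod n : j\geq 0\}\subseteq\{0,1,\dots,n-1\}$. For $0\leq x\leq n-1$, "$x$ is a coset leader" means that $x$ is the smallest element of $C_x$. *)

theory Defs
  imports Main
begin

definition cyc_coset :: "nat \<Rightarrow> nat \<Rightarrow> nat set" where
  "cyc_coset n x = {x * 2 ^ j mod n | j. True}"

definition coset_leader :: "nat \<Rightarrow> nat \<Rightarrow> bool" where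
  "coset_leader n x \<longleftrightarrow> x < n \<and> (\<forall>y \<in> cyc_coset n x. x \<le> y)"

end

theory Submission
  imports Defs
begin

lemma coset_mem: "x * 2 ^ j mod n \<in> cyc_coset n x"
  by (auto simp: cyc_coset_def)

lemma coset_16:
  assumes "y \<in> cyc_coset n x"
  shows "(16 * y) mod n \<in> cyc_coset n x"
proof -
  obtain j where y: "y = x * 2 ^ j mod n" using assms by (auto simp: cyc_coset_def)
  have "(16 * y) mod n = (16 * (x * 2 ^ j)) mod n" by (simp add: y mod_mult_right_eq)
  also have "16 * (x * 2 ^ j) = x * 2 ^ (j + 4)" by (simp add: power_add)
  finally show ?thesis using coset_mem by metis
qed

lemma coset_neg:
  assumes "y \<in> cyc_coset n x" "y \<noteq> 0" "n = 2 ^ m + 1"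
  shows "n - y \<in> cyc_coset n x"
proof -
  obtain j where y: "y = x * 2 ^ j mod n" using assms by (auto simp: cyc_coset_def)
  define a where "a = x * 2 ^ j"
  have npos: "n > 0" using assms(3) by simp
  have "(a * 2 ^ m mod n + a mod n) mod n = (a * 2 ^ m + a) mod n" by (simp add: mod_add_eq)
  also have "a * 2 ^ m + a = a * n" using assms(3) by (simp add: algebra_simps)
  finally have s: "(a * 2 ^ m mod n + y) mod n = 0" by (simp add: y a_def)
  have h1: "a * 2 ^ m mod n < n" using npos by simp
  have h2: "y < n" using npos y by simp
  have h3: "y > 0" using assms(2) by simp
  have "a * 2 ^ m mod n + y = n"
  proof -
    let ?b = "a * 2 ^ m mod n + y"
    have "?b < 2 * n" using h1 h2 by linarith
    moreover have "?b > 0" using h3 by linarith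
    moreover have "n dvd ?b" using s by auto
    moreover obtain k where k: "?b = n * k" using \<open>n dvd ?b\<close> by (auto elim!: dvdE)
    ultimately have "k \<noteq> 0" "k < 2" by auto
    hence "k = 1" by linarith
    thus ?thesis using k by simp
  qed
  hence "n - y = x * 2 ^ (j + m) mod n" by (simp add: a_def power_add mult.assoc)
  thus ?thesis using coset_mem by metis
qed

lemma main_inv:
  fixes n x :: nat
  assumes L: "\<forall>y\<in>cyc_coset n x. x \<le> y"
    and N: "\<forall>y\<in>cyc_coset n x. y \<noteq> 0 \<longrightarrow> n - y \<in> cyc_coset n x"
    and xl: "7 * n < 40 * x" and xu: "5 * x < n"
  shows "\<exists>e\<in>cyc_coset n x. x \<le> e \<and> 5 * e \<le> n \<and>
           (\<exists>\<sigma>::int. (\<sigma> = 1 \<or> \<sigma> = -1) \<and> int n dvd (int e - \<sigma> * int x * 16 ^ j))"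
proof (induction j)
  case 0
  have "x * 2 ^ 0 mod n = x" using xu by simp
  hence "x \<in> cyc_coset n x" using coset_mem by metis
  thus ?case using xu by (intro bexI[of _ x]) (auto intro: exI[of _ 1])
next
  case (Suc j)
  then obtain e \<sigma> where e: "e \<in> cyc_coset n x" "x \<le> e" "5 * e \<le> n"
    and s: "\<sigma> = 1 \<or> \<sigma> = -1" and d: "int n dvd (int e - \<sigma> * int x * 16 ^ j)" by blast
  have r: "16 * e mod n \<in> cyc_coset n x" using coset_16[OF e(1)] .
  have e40: "7 * n < 40 * e" using xl e(2) by linarith
  show ?case
  proof (cases "3 * n \<le> 16 * e")
    case True
    have eq: "16 * e = (16 * e - 3 * n) + n * 3" using True by simp
    have lt: "16 * e - 3 * n < n" using e(3) xu by linarith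
    have "16 * e mod n = 16 * e - 3 * n" by (subst eq) (simp add: lt)
    hence mem: "16 * e - 3 * n \<in> cyc_coset n x" using r by simp
    have dd: "int (16 * e - 3 * n) - \<sigma> * int x * 16 ^ Suc j
        = 16 * (int e - \<sigma> * int x * 16 ^ j) - int n * 3"
      using True by (simp add: algebra_simps of_nat_diff)
    have "int n dvd (int (16 * e - 3 * n) - \<sigma> * int x * 16 ^ Suc j)"
      unfolding dd by (rule dvd_diff[OF dvd_mult[OF d] dvd_triv_left])
    moreover have "x \<le> 16 * e - 3 * n" using L mem by blast
    moreover have "5 * (16 * e - 3 * n) \<le> n" using e(3) by linarith
    ultimately show ?thesis using mem s by blast
  next
    case False
    have eq: "16 * e = (16 * e - 2 * n) + n * 2" using e40 by linarith
    have lt: "16 * e - 2 * n < n" using False by linarith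
    have "16 * e mod n = 16 * e - 2 * n" by (subst eq) (simp add: lt)
    hence mem0: "16 * e - 2 * n \<in> cyc_coset n x" using r by simp
    have nz: "16 * e - 2 * n \<noteq> 0" using e40 by linarith
    have mem: "3 * n - 16 * e \<in> cyc_coset n x"
    proof -
      have "n - (16 * e - 2 * n) = 3 * n - 16 * e" using lt e40 by linarith
      thus ?thesis using N mem0 nz by metis
    qed
    have dd: "int (3 * n - 16 * e) - (-\<sigma>) * int x * 16 ^ Suc j
        = int n * 3 - 16 * (int e - \<sigma> * int x * 16 ^ j)"
      using False by (simp add: algebra_simps of_nat_diff)
    have "int n dvd (int (3 * n - 16 * e) - (-\<sigma>) * int x * 16 ^ Suc j)"
      unfolding dd by (rule dvd_diff[OF dvd_triv_left dvd_mult[OF d]])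
    moreover have "x \<le> 3 * n - 16 * e" using L mem by blast
    moreover have "5 * (3 * n - 16 * e) \<le> n" using e40 by linarith
    moreover have "-\<sigma> = 1 \<or> -\<sigma> = -1" using s by auto
    ultimately show ?thesis using mem by blast
  qed
qed

theorem lemma4p4:
  fixes t m n x :: nat
  assumes "t \<ge> 2"
    and "m = 4 * t + 2"
    and "n = 2 ^ m + 1"
    and "odd x"
    and "2 ^ (4 * t - 1) + (2 ^ (4 * t) - 1) div 5 < x"
    and "x \<le> n - 1"
    and "5 * x \<noteq> n"
  shows "\<not> coset_leader n x"
proof
  assume CL: "coset_leader n x"
  define T :: nat where "T = 2 ^ (4 * t)"
  have T16: "T = 16 ^ t" unfolding T_def by (simp add: power_mult)
  have T5: "T mod 5 = 1" unfolding T16 by (simp add: power_mod[of 16 5 t, symmetric])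
  have T3: "T mod 3 = 1" unfolding T16 by (simp add: power_mod[of 16 3 t, symmetric])
  have Tpos: "T \<ge> 1" unfolding T_def by simp
  have nT: "n = 4 * T + 1" using assms(2,3) unfolding T_def by (simp add: power_add)
  have hT: "2 ^ (4 * t - 1) * 2 = T"
  proof -
    have "4 * t = Suc (4 * t - 1)" using assms(1) by simp
    hence "T = 2 ^ Suc (4 * t - 1)" unfolding T_def by metis
    thus ?thesis by simp
  qed
  have B5: "5 * ((T - 1) div 5) = T - 1" using T5 Tpos by (metis dvd_minus_mod dvd_mult_div_cancel)
  have x40: "7 * n < 40 * x"
  proof -
    define A :: nat where "A = 2 ^ (4 * t - 1)"
    define B :: nat where "B = (T - 1) div 5"
    have "A + B < x" using assms(5) unfolding T_def A_def B_def by simp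
    moreover have "2 * A = T" "5 * B = T - 1" using hT B5 unfolding A_def B_def by simp_all
    ultimately show ?thesis using nT Tpos by linarith
  qed
  have xn: "x < n" using assms(6) nT by linarith
  have L: "\<forall>y\<in>cyc_coset n x. x \<le> y" using CL unfolding coset_leader_def by blast
  have N: "\<forall>y\<in>cyc_coset n x. y \<noteq> 0 \<longrightarrow> n - y \<in> cyc_coset n x"
    using coset_neg assms(3) by blast
  have x0: "x * 2 ^ 0 mod n = x" using xn by simp
  have xC: "x \<in> cyc_coset n x" using coset_mem[of x 0 n] x0 by simp
  have xpos: "x > 0" using assms(4) by (cases x) auto
  have nodd: "odd n" using nT by simp
  have n3: "n mod 3 = 2" using nT T3 by presburger
  show False
  proof (cases "n < 2 * x")
    case True
    have "n - x \<in> cyc_coset n x" using N xC xpos by blast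
    thus False using L True by fastforce
  next
    case c1: False
    have x2: "2 * x < n" using c1 nodd by (metis dvd_triv_left le_neq_implies_less not_less)
    have m2: "x * 2 ^ 1 mod n = 2 * x" using x2 by simp
    have C2: "2 * x \<in> cyc_coset n x" using coset_mem[of x 1 n] m2 by simp
    show False
    proof (cases "n < 3 * x")
      case True
      have "n - 2 * x \<in> cyc_coset n x" using N C2 xpos by force
      thus False using L True by fastforce
    next
      case c2: False
      have x3: "3 * x < n" using c2 n3 by (metis le_neq_implies_less mod_mult_self1_is_0 not_less zero_neq_numeral)
      show False
      proof (cases "n < 4 * x")
        case True
        have eq: "4 * x = (4 * x - n) + n * 1" using True by simp
        have "x * 2 ^ 2 mod n = 4 * x - n" using True x2 by (simp add: le_mod_geq mult.commute)
        hence "4 * x - n \<in> cyc_coset n x" using coset_mem[of x 2 n] by simp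
        hence "x \<le> 4 * x - n" using L by blast
        thus False using x3 True by linarith
      next
        case c3: False
        have "4 * x \<noteq> n" using nodd by (metis dvd_mult2 even_numeral)
        hence x4: "4 * x < n" using c3 by linarith
        have "x * 2 ^ 2 mod n = 4 * x" using x4 by simp
        hence C4: "4 * x \<in> cyc_coset n x" using coset_mem[of x 2 n] by simp
        show False
        proof (cases "n < 5 * x")
          case True
          have "n - 4 * x \<in> cyc_coset n x" using N C4 xpos by force
          thus False using L True by fastforce
        next
          case False
          hence x5: "5 * x < n" using assms(7) by linarith
          obtain e where e: "e \<in> cyc_coset n x" "x \<le> e" "5 * e \<le> n"
            and s: "\<exists>\<sigma>::int. (\<sigma> = 1 \<or> \<sigma> = -1) \<and> int n dvd (int e - \<sigma> * int x * 16 ^ (t + 1))"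
            using main_inv[OF L N x40 x5, of "t + 1"] by blast
          then obtain \<sigma> :: int where s1: "\<sigma> = 1 \<or> \<sigma> = -1"
            and d: "int n dvd (int e - \<sigma> * int x * 16 ^ (t + 1))" by blast
          have p: "(16::int) ^ (t + 1) = 4 * int n - 4" using nT T16 by simp
          have "int e - \<sigma> * int x * 16 ^ (t + 1) = (int e + 4 * \<sigma> * int x) - int n * (4 * \<sigma> * int x)"
            unfolding p by (simp add: algebra_simps)
          hence d2: "int n dvd (int e + 4 * \<sigma> * int x)" using d
            by (metis dvd_diff_commute dvd_add_right_iff dvd_triv_left diff_add_cancel)
          show False
          proof (cases "\<sigma> = 1")
            case True
            have "int n dvd (int e + 4 * int x)" using d2 True by simp
            moreover have "0 < int e + 4 * int x" "int e + 4 * int x < int n" using xpos e x4 x5 by linarith+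
            ultimately show False using zdvd_not_zless by blast
          next
            case False
            hence "\<sigma> = -1" using s1 by simp
            hence "int n dvd (int e - 4 * int x)" using d2 by simp
            hence "int n dvd (4 * int x - int e)" by (metis dvd_minus_iff minus_diff_eq)
            moreover have "0 < 4 * int x - int e" "4 * int x - int e < int n" using x40 e x4 x5 by linarith+
            ultimately show False using zdvd_not_zless by blast
          qed
        qed
      qed
    qed
  qed
qed

end
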